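(* Let $(L,\rho,\tau)$ be a probabilistic metric space whose triangle function $\tau$ is sup-continuous and satisfies condition (W). If $(A_n)$ is a sequence in $P_f(L)$ converging to $A\in P_f(L)$ with respect to the probabilistic Pompeiu–Hausdorff metric $H$, then $$A=\bigcap_{n\ge1}\operatorname{cl}\Big(\bigcup_{m\ge n}A_m\Big)=\bigcap_{\epsilon>0}\bigcup_{n\ge1}\bigcap_{m\ge n}(A_m)_\epsilon .$$
   Context: $\Delta^+$ is the set of functions $F:[-\infty,\infty]\to[0,1]$ that are nondecreasing, left-continuous on $\mathbb R$, with $F(-\infty)=0$, $F(\infty)=1$, $F(0)=0$; ordered pointwise; $\epsilon_0(x)=0$ for $x\le0$, $=1$ for $x>0$. Infimum of $\{F_i\}$ in $\Delta^+$: $G(x)=\sup_{x'<x}\inf_iF_i(x')$; supremum pointwise. A triangle function is $\tau:\Delta^+\times\Delta^+\to\Delta^+$ commutative, associative, nondecreasing in each argument, with $\tau(F,\epsilon_0)=F$, continuous for weak convergence. A probabilistic metric space $(L,\rho,\tau)$: set $L$, continuous triangle function $\tau$, $\rho(p,q)=F_{pq}\in\Delta^+$ with $F_{pp}=\epsilon_0$, $F_{pq}=\epsilon_0\Rightarrow p=q$, $F_{pq}=F_{qp}$, $F_{pr}\ge\tau(F_{pq},F_{qr})$. Strong topology: neighborhood base $U_t(p)=\{q:F_{pq}(t)>1-t\}$, $t>0$; $\operatorname{cl}$ is closure in it. For $A\subset L$, $\epsilon>0$: $A_\epsilon=\bigcup_{p\in A}U_\epsilon(p)$. $\tau$ is sup-continuous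 if $\tau(\sup_iF_i,G)=\sup_i\tau(F_i,G)$ for every family $\{F_i\}\subset\Delta^+$, $G\in\Delta^+$. Condition (W): for all $x>0$, $F,G\in\Delta^+$, $\alpha,\beta\in\mathbb R$, $F(x)>\alpha$ and $G(x)>\beta$ imply $\tau(F,G)(x)>\alpha+\beta-1$. For nonempty $A,B\subset L$: $F_{pB}(x)=\sup_{q\in B}F_{pq}(x)$, $\Gamma^*_{AB}(x)=\inf_{p\in A}F_{pB}(x)$, $F^*_{AB}(x)=\sup_{x'<x}\Gamma^*_{AB}(x')$, $H(A,B)=F_{AB}=\min\{F^*_{AB},F^*_{BA}\}$. $P_f(L)$ is the family of nonempty closed subsets; $A_n\to A$ with respect to $H$ iff for every $t>0$, $F_{A_nA}(t)>1-t$ for all large $n$. *)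

theory Defs
  imports Complex_Main "HOL-Library.Extended_Real"
begin

type_synonym dist_fun = "ereal \<Rightarrow> real"

definition DeltaPlus :: "dist_fun set" where
  "DeltaPlus = {F. mono F \<and> (\<forall>x. 0 \<le> F x \<and> F x \<le> 1)
      \<and> (\<forall>x::real. continuous (at_left x) (\<lambda>y::real. F (ereal y)))
      \<and> F (-\<infinity>) = 0 \<and> F \<infinity> = 1 \<and> F 0 = 0}"

definition eps0 :: dist_fun where
  "eps0 x = (if x \<le> 0 then 0 else 1)"

definition weak_conv :: "(nat \<Rightarrow> dist_fun) \<Rightarrow> dist_fun \<Rightarrow> bool" where
  "weak_conv Fs F \<longleftrightarrow> (\<forall>x::real. isCont (\<lambda>y::real. F (ereal y)) x
        \<longrightarrow> (\<lambda>n. Fs n (ereal x)) \<longlonglongrightarrow> F (ereal x))"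

definition triangle_function :: "(dist_fun \<Rightarrow> dist_fun \<Rightarrow> dist_fun) \<Rightarrow> bool" where
  "triangle_function \<tau> \<longleftrightarrow>
     (\<forall>F\<in>DeltaPlus. \<forall>G\<in>DeltaPlus. \<tau> F G \<in> DeltaPlus)
   \<and> (\<forall>F\<in>DeltaPlus. \<forall>G\<in>DeltaPlus. \<tau> F G = \<tau> G F)
   \<and> (\<forall>F\<in>DeltaPlus. \<forall>G\<in>DeltaPlus. \<forall>K\<in>DeltaPlus. \<tau> F (\<tau> G K) = \<tau> (\<tau> F G) K)
   \<and> (\<forall>F\<in>DeltaPlus. \<forall>F'\<in>DeltaPlus. \<forall>G\<in>DeltaPlus.
        (\<forall>x. F x \<le> F' x) \<longrightarrow> (\<forall>x. \<tau> F G x \<le> \<tau> F' G x))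
   \<and> (\<forall>F\<in>DeltaPlus. \<tau> F eps0 = F)"

definition continuous_tf :: "(dist_fun \<Rightarrow> dist_fun \<Rightarrow> dist_fun) \<Rightarrow> bool" where
  "continuous_tf \<tau> \<longleftrightarrow> (\<forall>Fs Gs F G.
      (\<forall>n. Fs n \<in> DeltaPlus) \<longrightarrow> (\<forall>n. Gs n \<in> DeltaPlus) \<longrightarrow> F \<in> DeltaPlus \<longrightarrow> G \<in> DeltaPlus \<longrightarrow>
      weak_conv Fs F \<longrightarrow> weak_conv Gs G \<longrightarrow> weak_conv (\<lambda>n. \<tau> (Fs n) (Gs n)) (\<tau> F G))"

definition sup_continuous_tf :: "(dist_fun \<Rightarrow> dist_fun \<Rightarrow> dist_fun) \<Rightarrow> bool" where
  "sup_continuous_tf \<tau> \<longleftrightarrow> (\<forall>S G. S \<noteq> {} \<longrightarrow> S \<subseteq> DeltaPlus \<longrightarrow> G \<in> DeltaPlus \<longrightarrow>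
      \<tau> (\<lambda>x. SUP F\<in>S. F x) G = (\<lambda>x. SUP F\<in>S. \<tau> F G x))"

definition condition_W :: "(dist_fun \<Rightarrow> dist_fun \<Rightarrow> dist_fun) \<Rightarrow> bool" where
  "condition_W \<tau> \<longleftrightarrow> (\<forall>x::real. x > 0 \<longrightarrow> (\<forall>F\<in>DeltaPlus. \<forall>G\<in>DeltaPlus. \<forall>\<alpha> \<beta>::real.
      F (ereal x) > \<alpha> \<longrightarrow> G (ereal x) > \<beta> \<longrightarrow> \<tau> F G (ereal x) > \<alpha> + \<beta> - 1))"

definition PM_space :: "('a \<Rightarrow> 'a \<Rightarrow> dist_fun) \<Rightarrow> (dist_fun \<Rightarrow> dist_fun \<Rightarrow> dist_fun) \<Rightarrow> bool" where
  "PM_space \<rho> \<tau> \<longleftrightarrow> triangle_function \<tau> \<and> continuous_tf \<tau>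
     \<and> (\<forall>p q. \<rho> p q \<in> DeltaPlus)
     \<and> (\<forall>p. \<rho> p p = eps0)
     \<and> (\<forall>p q. \<rho> p q = eps0 \<longrightarrow> p = q)
     \<and> (\<forall>p q. \<rho> p q = \<rho> q p)
     \<and> (\<forall>p q r. \<forall>x. \<rho> p r x \<ge> \<tau> (\<rho> p q) (\<rho> q r) x)"

definition U_nbhd :: "('a \<Rightarrow> 'a \<Rightarrow> dist_fun) \<Rightarrow> real \<Rightarrow> 'a \<Rightarrow> 'a set" where
  "U_nbhd \<rho> t p = {q. \<rho> p q (ereal t) > 1 - t}"

definition strong_cl :: "('a \<Rightarrow> 'a \<Rightarrow> dist_fun) \<Rightarrow> 'a set \<Rightarrow> 'a set" where
  "strong_cl \<rho> S = {p. \<forall>t>0. U_nbhd \<rho> t p \<inter> S \<noteq> {}}"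

definition strong_closed :: "('a \<Rightarrow> 'a \<Rightarrow> dist_fun) \<Rightarrow> 'a set \<Rightarrow> bool" where
  "strong_closed \<rho> S \<longleftrightarrow> strong_cl \<rho> S \<subseteq> S"

definition Pf :: "('a \<Rightarrow> 'a \<Rightarrow> dist_fun) \<Rightarrow> 'a set set" where
  "Pf \<rho> = {S. S \<noteq> {} \<and> strong_closed \<rho> S}"

definition eps_nbhd :: "('a \<Rightarrow> 'a \<Rightarrow> dist_fun) \<Rightarrow> 'a set \<Rightarrow> real \<Rightarrow> 'a set" where
  "eps_nbhd \<rho> A \<epsilon> = (\<Union>p\<in>A. U_nbhd \<rho> \<epsilon> p)"

definition F_pB :: "('a \<Rightarrow> 'a \<Rightarrow> dist_fun) \<Rightarrow> 'a \<Rightarrow> 'a set \<Rightarrow> dist_fun" where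
  "F_pB \<rho> p B x = (SUP q\<in>B. \<rho> p q x)"

definition Gamma_star :: "('a \<Rightarrow> 'a \<Rightarrow> dist_fun) \<Rightarrow> 'a set \<Rightarrow> 'a set \<Rightarrow> dist_fun" where
  "Gamma_star \<rho> A B x = (INF p\<in>A. F_pB \<rho> p B x)"

definition F_star :: "('a \<Rightarrow> 'a \<Rightarrow> dist_fun) \<Rightarrow> 'a set \<Rightarrow> 'a set \<Rightarrow> dist_fun" where
  "F_star \<rho> A B x = (SUP x'\<in>{x'. x' < x}. Gamma_star \<rho> A B x')"

definition Hpm :: "('a \<Rightarrow> 'a \<Rightarrow> dist_fun) \<Rightarrow> 'a set \<Rightarrow> 'a set \<Rightarrow> dist_fun" where
  "Hpm \<rho> A B x = min (F_star \<rho> A B x) (F_star \<rho> B A x)"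

definition H_converges :: "('a \<Rightarrow> 'a \<Rightarrow> dist_fun) \<Rightarrow> (nat \<Rightarrow> 'a set) \<Rightarrow> 'a set \<Rightarrow> bool" where
  "H_converges \<rho> As A \<longleftrightarrow> (\<forall>t::real>0. \<exists>N. \<forall>n\<ge>N. Hpm \<rho> (As n) A (ereal t) > 1 - t)"

end

theory Submission
  imports Defs
begin

lemma Fstar_incl:
  fixes \<rho> :: "'a \<Rightarrow> 'a \<Rightarrow> ereal \<Rightarrow> real"
  assumes rng: "\<And>p q x. 0 \<le> \<rho> p q x \<and> \<rho> p q x \<le> 1"
    and mon: "\<And>p q. mono (\<rho> p q)"
    and A: "A \<noteq> {}" and B: "B \<noteq> {}"
    and gt: "F_star \<rho> A B (ereal t) > c"
  shows "\<forall>p\<in>A. \<exists>q\<in>B. \<rho> p q (ereal t) > c"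
proof
  fix p assume pA: "p \<in> A"
  obtain p0 where p0: "p0 \<in> A" using A by blast
  obtain q0 where q0: "q0 \<in> B" using B by blast
  have bdB: "\<And>p x. bdd_above ((\<lambda>q. \<rho> p q x) ` B)"
    using rng by (intro bdd_aboveI[where M=1]) auto
  have FpB_le: "\<And>p x. F_pB \<rho> p B x \<le> 1"
    unfolding F_pB_def using B rng by (intro cSUP_least) auto
  have FpB_ge: "\<And>p x. F_pB \<rho> p B x \<ge> 0"
  proof -
    fix p x
    have "\<rho> p q0 x \<le> F_pB \<rho> p B x" unfolding F_pB_def
      using q0 bdB by (intro cSUP_upper) auto
    thus "F_pB \<rho> p B x \<ge> 0" using rng[of p q0 x] by linarith
  qed
  have bdA: "\<And>x. bdd_below ((\<lambda>p. F_pB \<rho> p B x) ` A)"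
    using FpB_ge by (intro bdd_belowI[where m=0]) auto
  have G_le: "\<And>x. Gamma_star \<rho> A B x \<le> 1"
  proof -
    fix x
    have "Gamma_star \<rho> A B x \<le> F_pB \<rho> p0 B x" unfolding Gamma_star_def
      using p0 bdA by (intro cINF_lower) auto
    thus "Gamma_star \<rho> A B x \<le> 1" using FpB_le[of p0 x] by linarith
  qed
  have ne: "{x'. x' < ereal t} \<noteq> {}" by (auto intro!: exI[where x="-\<infinity>"])
  have "\<exists>x'\<in>{x'. x' < ereal t}. c < Gamma_star \<rho> A B x'"
    using gt unfolding F_star_def
    by (subst (asm) less_cSUP_iff[OF ne]) (auto intro!: bdd_aboveI[where M=1] G_le)
  then obtain x' where x': "x' < ereal t" "c < Gamma_star \<rho> A B x'" by auto
  have "Gamma_star \<rho> A B x' \<le> F_pB \<rho> p B x'" unfolding Gamma_star_def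
    using pA bdA by (intro cINF_lower) auto
  hence "c < F_pB \<rho> p B x'" using x' by linarith
  then obtain q where q: "q \<in> B" "c < \<rho> p q x'" unfolding F_pB_def
    using less_cSUP_iff[OF B bdB] by blast
  have "\<rho> p q x' \<le> \<rho> p q (ereal t)" using mon[of p q] x'(1) by (auto simp: mono_def)
  thus "\<exists>q\<in>B. \<rho> p q (ereal t) > c" using q by force
qed

theorem proposition4p7:
  fixes \<rho> :: "'a \<Rightarrow> 'a \<Rightarrow> ereal \<Rightarrow> real"
    and \<tau> :: "(ereal \<Rightarrow> real) \<Rightarrow> (ereal \<Rightarrow> real) \<Rightarrow> ereal \<Rightarrow> real"
    and As :: "nat \<Rightarrow> 'a set" and A :: "'a set"
  assumes "PM_space \<rho> \<tau>"
    and "sup_continuous_tf \<tau>"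
    and "condition_W \<tau>"
    and "\<forall>n\<ge>1. As n \<in> Pf \<rho>"
    and "A \<in> Pf \<rho>"
    and "H_converges \<rho> As A"
  shows "A = (\<Inter>n\<in>{1..}. strong_cl \<rho> (\<Union>m\<in>{n..}. As m))
       \<and> A = (\<Inter>\<epsilon>\<in>{0<..}. \<Union>n\<in>{1..}. \<Inter>m\<in>{n..}. eps_nbhd \<rho> (As m) \<epsilon>)"
proof -
  have inD: "\<And>p q. \<rho> p q \<in> DeltaPlus" using assms(1) unfolding PM_space_def by blast
  have sym: "\<And>p q. \<rho> p q = \<rho> q p" using assms(1) unfolding PM_space_def by blast
  have tri: "\<And>p q r x. \<rho> p r x \<ge> \<tau> (\<rho> p q) (\<rho> q r) x"
    using assms(1) unfolding PM_space_def by blast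
  have rng: "\<And>p q x. 0 \<le> \<rho> p q x \<and> \<rho> p q x \<le> 1" using inD unfolding DeltaPlus_def by blast
  have mon: "\<And>p q. mono (\<rho> p q)" using inD unfolding DeltaPlus_def by blast
  have W: "\<And>p q r s. s > 0 \<Longrightarrow> \<rho> p q (ereal s) > 1 - s \<Longrightarrow> \<rho> q r (ereal s) > 1 - s
      \<Longrightarrow> \<rho> p r (ereal s) > 1 - 2 * s"
  proof -
    fix p q r :: 'a and s :: real
    assume "s > 0" "\<rho> p q (ereal s) > 1 - s" "\<rho> q r (ereal s) > 1 - s"
    hence "\<tau> (\<rho> p q) (\<rho> q r) (ereal s) > (1 - s) + (1 - s) - 1"
      using assms(3) inD unfolding condition_W_def by blast
    thus "\<rho> p r (ereal s) > 1 - 2 * s" using tri[of p q r "ereal s"] by linarith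
  qed
  have Ane: "A \<noteq> {}" and Acl: "strong_cl \<rho> A \<subseteq> A" using assms(5) unfolding Pf_def strong_closed_def by auto
  have Asne: "\<And>n. n \<ge> 1 \<Longrightarrow> As n \<noteq> {}" using assms(4) unfolding Pf_def by auto
  have conv: "\<And>t. t > 0 \<Longrightarrow> \<exists>N\<ge>1. \<forall>n\<ge>N. A \<subseteq> eps_nbhd \<rho> (As n) t \<and> As n \<subseteq> eps_nbhd \<rho> A t"
  proof -
    fix t :: real assume "t > 0"
    then obtain N where N: "\<forall>n\<ge>N. Hpm \<rho> (As n) A (ereal t) > 1 - t"
      using assms(6) unfolding H_converges_def by blast
    have "\<forall>n\<ge>max N 1. A \<subseteq> eps_nbhd \<rho> (As n) t \<and> As n \<subseteq> eps_nbhd \<rho> A t"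
    proof (intro allI impI conjI subsetI)
      fix n p assume n: "max N 1 \<le> n"
      have h: "Hpm \<rho> (As n) A (ereal t) > 1 - t" using N n by simp
      have ne: "As n \<noteq> {}" using Asne n by simp
      {
        assume "p \<in> A"
        moreover have "F_star \<rho> A (As n) (ereal t) > 1 - t" using h unfolding Hpm_def by simp
        ultimately obtain q where "q \<in> As n" "\<rho> p q (ereal t) > 1 - t"
          using Fstar_incl[of \<rho>, OF rng mon Ane ne] by blast
        thus "p \<in> eps_nbhd \<rho> (As n) t" unfolding eps_nbhd_def U_nbhd_def using sym by auto
      }
      {
        assume "p \<in> As n"
        moreover have "F_star \<rho> (As n) A (ereal t) > 1 - t" using h unfolding Hpm_def by simp
        ultimately obtain q where "q \<in> A" "\<rho> p q (ereal t) > 1 - t"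
          using Fstar_incl[of \<rho>, OF rng mon ne Ane] by blast
        thus "p \<in> eps_nbhd \<rho> A t" unfolding eps_nbhd_def U_nbhd_def using sym by auto
      }
    qed
    thus "\<exists>N\<ge>1. \<forall>n\<ge>N. A \<subseteq> eps_nbhd \<rho> (As n) t \<and> As n \<subseteq> eps_nbhd \<rho> A t"
      by (intro exI[where x="max N 1"]) auto
  qed
  let ?S1 = "(\<Inter>n\<in>{1..}. strong_cl \<rho> (\<Union>m\<in>{n..}. As m))"
  let ?S2 = "(\<Inter>\<epsilon>\<in>{0<..}. \<Union>n\<in>{1..}. \<Inter>m\<in>{n..}. eps_nbhd \<rho> (As m) \<epsilon>)"
  have A2: "A \<subseteq> ?S2"
  proof
    fix p assume p: "p \<in> A"
    show "p \<in> ?S2"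
    proof (rule INT_I)
      fix e :: real assume "e \<in> {0<..}"
      then obtain N where N: "N \<ge> 1" "\<forall>n\<ge>N. A \<subseteq> eps_nbhd \<rho> (As n) e" using conv by force
      thus "p \<in> (\<Union>n\<in>{1..}. \<Inter>m\<in>{n..}. eps_nbhd \<rho> (As m) e)" using p by blast
    qed
  qed
  have S21: "?S2 \<subseteq> ?S1"
  proof
    fix p assume p: "p \<in> ?S2"
    show "p \<in> ?S1"
    proof (rule INT_I)
      fix n :: nat assume n: "n \<in> {1..}"
      show "p \<in> strong_cl \<rho> (\<Union>m\<in>{n..}. As m)" unfolding strong_cl_def
      proof (intro CollectI allI impI)
        fix t :: real assume t: "t > 0"
        then obtain n' where "\<forall>m\<ge>n'. p \<in> eps_nbhd \<rho> (As m) t" using p by force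
        hence "p \<in> eps_nbhd \<rho> (As (max n n')) t" by simp
        then obtain q where "q \<in> As (max n n')" "\<rho> q p (ereal t) > 1 - t"
          unfolding eps_nbhd_def U_nbhd_def by auto
        then have "q \<in> U_nbhd \<rho> t p" "q \<in> (\<Union>m\<in>{n..}. As m)"
          unfolding U_nbhd_def using sym[of p q] by auto
        thus "U_nbhd \<rho> t p \<inter> (\<Union>m\<in>{n..}. As m) \<noteq> {}" by blast
      qed
    qed
  qed
  have S1A: "?S1 \<subseteq> A"
  proof
    fix p assume p: "p \<in> ?S1"
    have "p \<in> strong_cl \<rho> A" unfolding strong_cl_def
    proof (intro CollectI allI impI)
      fix t :: real assume t: "t > 0"
      define s where "s = t / 2"
      have s: "s > 0" using t s_def by simp
      then obtain N where N: "N \<ge> 1" "\<forall>n\<ge>N. As n \<subseteq> eps_nbhd \<rho> A s" using conv by blast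
      have "p \<in> strong_cl \<rho> (\<Union>m\<in>{N..}. As m)" using p N(1) by (simp only: INT_iff) simp
      hence "U_nbhd \<rho> s p \<inter> (\<Union>m\<in>{N..}. As m) \<noteq> {}"
        using s unfolding strong_cl_def by blast
      then obtain q m where q: "\<rho> p q (ereal s) > 1 - s" "m \<ge> N" "q \<in> As m"
        unfolding U_nbhd_def by blast
      have "q \<in> eps_nbhd \<rho> A s" using N(2) q(2,3) by blast
      then obtain r where r: "r \<in> A" "\<rho> r q (ereal s) > 1 - s"
        unfolding eps_nbhd_def U_nbhd_def by blast
      have "\<rho> q r (ereal s) > 1 - s" using r(2) sym[of q r] by simp
      hence "\<rho> p r (ereal s) > 1 - 2 * s" using W[OF s q(1)] by blast
      moreover have "\<rho> p r (ereal s) \<le> \<rho> p r (ereal t)" using mon[of p r] s s_def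
        by (auto simp: mono_def)
      ultimately have "r \<in> U_nbhd \<rho> t p" unfolding U_nbhd_def s_def by simp
      thus "U_nbhd \<rho> t p \<inter> A \<noteq> {}" using r by blast
    qed
    thus "p \<in> A" using Acl by blast
  qed
  have e1: "A = ?S1" using subset_antisym[OF order_trans[OF A2 S21] S1A] .
  have e2: "A = ?S2" using subset_antisym[OF A2 order_trans[OF S21 S1A]] .
  show ?thesis using e1 e2 by (rule conjI)
qed

end
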